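(* Let $Y(1),Y(2),\dots$ be i.i.d. real random variables with $\mathbf E Y(1)=0$ and $\mathbf E Y(1)^2<\infty$, and let $T(n)=Y(1)+\dots+Y(n)$. Let $(\mathcal F_k)_{k\ge0}$ be a filtration such that each $Y(k)$ is $\mathcal F_k$-measurable and independent of $\mathcal F_{k-1}$, and let $\sigma$ be a stopping time with respect to $(\mathcal F_k)$. Then for every $r>1$, every $t>0$ and every $n\ge1$, $$\mathbf P\big(T(n)\ge t,\ \sigma>n\big)\le \mathbf P\big(Y(1)\ge t/r\big)\sum_{i=1}^n\mathbf P(\sigma>i-1)+e^r\Big(\frac{n r\,\mathbf E Y(1)^2}{t^2}\Big)^r.$$ *)

theory Defs
  imports "HOL-Probability.Probability"
begin

text \<open>Infinite values are represented by the top element of enat.\<close>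
definition nat_stopping_time :: "(nat \<Rightarrow> 'a measure) \<Rightarrow> ('a \<Rightarrow> enat) \<Rightarrow> bool" where
  "nat_stopping_time F \<sigma> = (\<forall>k::nat. Measurable.pred (F k) (\<lambda>x. \<sigma> x \<le> enat k))"

end

theory Submission
  imports Defs
begin
lemma exp_neg_quad: fixes u :: real assumes "u \<le> 0" shows "exp u \<le> 1 + u + u\<^sup>2 / 2"
proof (cases "u = 0")
  case True then show ?thesis by simp
next
  case False
  obtain s where "exp u = (\<Sum>m<3. (u ^ m) / fact m) + (exp s / fact 3) * u ^ 3"
    using Maclaurin_exp_lt[OF False, of 3] by auto
  moreover have "(\<Sum>m<3. (u ^ m) / fact m) = 1 + u + u\<^sup>2 / 2"
    by (simp add: numeral_3_eq_3 power2_eq_square)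
  moreover have "(exp s / fact 3) * u ^ 3 \<le> 0"
    using assms by (intro mult_nonneg_nonpos) (auto simp: power_le_zero_eq)
  ultimately show ?thesis by linarith
qed

lemma exp_pos_quad: fixes u v :: real assumes "0 \<le> u" "u \<le> v" "0 < v"
  shows "exp u \<le> 1 + u + u\<^sup>2 * ((exp v - 1 - v) / v\<^sup>2)"
proof -
  have su: "summable (\<lambda>n. inverse (fact (n + 2)) * u ^ (n + 2))"
    by (rule summable_exp [THEN summable_ignore_initial_segment])
  have sv: "summable (\<lambda>n. inverse (fact (n + 2)) * v ^ (n + 2))"
    by (rule summable_exp [THEN summable_ignore_initial_segment])
  have "(\<Sum>n. inverse (fact (n + 2)) * u ^ (n + 2)) \<le> (\<Sum>n. (u\<^sup>2 / v\<^sup>2) * (inverse (fact (n + 2)) * v ^ (n + 2)))"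
  proof (rule suminf_le)
    fix n
    have "u ^ n \<le> v ^ n" using assms by (simp add: power_mono)
    then have "u\<^sup>2 * u ^ n \<le> u\<^sup>2 * v ^ n" by (simp add: mult_left_mono)
    moreover have "(u\<^sup>2 / v\<^sup>2) * v ^ (n + 2) = u\<^sup>2 * v ^ n" using assms by (simp add: power_add power2_eq_square)
    ultimately have "u ^ (n+2) \<le> (u\<^sup>2 / v\<^sup>2) * v ^ (n + 2)" by (simp only: power_add mult.commute)
    then show "inverse (fact (n + 2)) * u ^ (n + 2) \<le> (u\<^sup>2 / v\<^sup>2) * (inverse (fact (n + 2)) * v ^ (n + 2))"
      by (metis (no_types, lifting) inverse_nonnegative_iff_nonnegative mult.left_commute mult_left_mono fact_ge_zero)
  qed (use su sv summable_mult in auto)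
  also have "\<dots> = (u\<^sup>2 / v\<^sup>2) * (exp v - 1 - v)"
    using suminf_mult[OF sv, of "u\<^sup>2 / v\<^sup>2"] exp_first_two_terms[of v] by simp
  finally show ?thesis using exp_first_two_terms[of u] by simp
qed

lemma exp_quad_bound: fixes u v :: real assumes "u \<le> v" "0 < v"
  shows "exp u \<le> 1 + u + u\<^sup>2 * (exp v / v\<^sup>2)"
proof (cases "u \<le> 0")
  case True
  have "v\<^sup>2 / 2 \<le> exp v" using exp_lower_Taylor_quadratic[of v] assms by simp
  then have "1/2 \<le> exp v / v\<^sup>2" using assms by (simp add: field_simps)
  then have "u\<^sup>2 * (1/2) \<le> u\<^sup>2 * (exp v / v\<^sup>2)" by (intro mult_left_mono) auto
  then show ?thesis using exp_neg_quad[OF True] by linarith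
next
  case False
  have "(exp v - 1 - v) / v\<^sup>2 \<le> exp v / v\<^sup>2" using assms by (simp add: divide_right_mono)
  then have "u\<^sup>2 * ((exp v - 1 - v) / v\<^sup>2) \<le> u\<^sup>2 * (exp v / v\<^sup>2)" by (intro mult_left_mono) auto
  then show ?thesis using exp_pos_quad[of u v] False assms by simp
qed
lemma chernoff:
  fixes M :: "'a measure" and Y :: "nat \<Rightarrow> 'a \<Rightarrow> real" and t y h :: real and n :: nat
  assumes P: "prob_space M"
    and rv: "\<And>k. k \<ge> 1 \<Longrightarrow> Y k \<in> borel_measurable M"
    and indep: "prob_space.indep_vars M (\<lambda>_. borel) Y {1..}"
    and ident: "\<And>k. k \<ge> 1 \<Longrightarrow> distr M borel (Y k) = distr M borel (Y 1)"
    and mean0: "integrable M (Y 1)" "(\<integral>x. Y 1 x \<partial>M) = 0"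
    and sq: "integrable M (\<lambda>x. (Y 1 x)\<^sup>2)"
    and h: "h > 0" and y: "y > 0"
  shows "measure M {x\<in>space M. t \<le> (\<Sum>k=1..n. Y k x) \<and> (\<forall>i\<in>{1..n}. Y i x < y)}
     \<le> exp (- h * t) * (1 + (\<integral>x. (Y 1 x)\<^sup>2 \<partial>M) * (exp (h * y) / y\<^sup>2)) ^ n"
proof -
  interpret prob_space M by (rule P)
  define c where "c = exp (h * y) / y\<^sup>2"
  define s where "s = (\<integral>x. (Y 1 x)\<^sup>2 \<partial>M)"
  define g where "g = (\<lambda>z::real. if z < y then exp (h * z) else 0)"
  have gm[measurable]: "g \<in> borel_measurable borel" unfolding g_def by measurable
  have g0: "0 \<le> g z" for z unfolding g_def by auto
  have gb: "g z \<le> exp (h * y)" for z unfolding g_def using h by auto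
  have rvI[measurable]: "Y k \<in> borel_measurable M" if "k \<in> {1..n}" for k using rv that by auto
  have gint: "integrable M (\<lambda>x. g (Y k x))" if "k \<ge> 1" for k
    by (rule integrable_const_bound[where B="exp (h * y)"]) (use g0 gb rv[OF that] in auto)
  have gsame: "(\<integral>x. g (Y k x) \<partial>M) = (\<integral>x. g (Y 1 x) \<partial>M)" if "k \<ge> 1" for k
  proof -
    have "(\<integral>x. g (Y k x) \<partial>M) = integral\<^sup>L (distr M borel (Y k)) g"
      using rv[OF that] by (simp add: integral_distr)
    also have "\<dots> = integral\<^sup>L (distr M borel (Y 1)) g" using ident[OF that] by simp
    also have "\<dots> = (\<integral>x. g (Y 1 x) \<partial>M)" using rv[of 1] by (simp add: integral_distr)
    finally show ?thesis .
  qed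
  have gpt: "g z \<le> 1 + h * z + z\<^sup>2 * c" for z
  proof (cases "z < y")
    case True
    have "exp (h*z) \<le> 1 + h*z + (h*z)\<^sup>2 * (exp (h*y) / (h*y)\<^sup>2)"
      by (rule exp_quad_bound) (use True h y in auto)
    also have "(h*z)\<^sup>2 * (exp (h*y) / (h*y)\<^sup>2) = z\<^sup>2 * c"
      using h y unfolding c_def by (simp add: power_mult_distrib field_simps)
    finally show ?thesis using True unfolding g_def by simp
  next
    case False
    then have "z > 0" using y by auto
    then have "0 \<le> 1 + h * z + z\<^sup>2 * c" using h y unfolding c_def by (simp add: add_nonneg_nonneg)
    then show ?thesis using False unfolding g_def by simp
  qed
  have Eg: "(\<integral>x. g (Y 1 x) \<partial>M) \<le> 1 + s * c"
  proof -
    have "(\<integral>x. g (Y 1 x) \<partial>M) \<le> (\<integral>x. 1 + h * Y 1 x + (Y 1 x)\<^sup>2 * c \<partial>M)"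
      by (rule integral_mono) (use gint[of 1] mean0 sq gpt in auto)
    also have "\<dots> = (\<integral>x. 1 + h * Y 1 x \<partial>M) + (\<integral>x. (Y 1 x)\<^sup>2 * c \<partial>M)"
      by (rule Bochner_Integration.integral_add) (use mean0 sq in auto)
    also have "(\<integral>x. 1 + h * Y 1 x \<partial>M) = (\<integral>x. 1 \<partial>M) + (\<integral>x. h * Y 1 x \<partial>M)"
      by (rule Bochner_Integration.integral_add) (use mean0 in auto)
    also have "(\<integral>x. 1 \<partial>M) = (1::real)" by (simp add: prob_space.prob_space[OF P])
    also have "(\<integral>x. h * Y 1 x \<partial>M) = 0" using mean0 by simp
    also have "(\<integral>x. (Y 1 x)\<^sup>2 * c \<partial>M) = s * c" unfolding s_def by simp
    finally show ?thesis using mean0 by simp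
  qed
  define W where "W = (\<lambda>x. \<Prod>i\<in>{1..n}. g (Y i x))"
  have ind2: "indep_vars (\<lambda>_. borel) (\<lambda>i x. g (Y i x)) {1..n}"
    by (rule indep_vars_compose2[OF indep_vars_subset[OF indep]]) (auto simp only: gm atLeastAtMost_iff atLeast_iff subset_iff)
  have EW: "(\<integral>x. W x \<partial>M) = (\<Prod>i\<in>{1..n}. \<integral>x. g (Y i x) \<partial>M)"
    unfolding W_def by (rule indep_vars_lebesgue_integral[OF _ ind2]) (use gint in auto)
  have Wint: "integrable M W"
    unfolding W_def by (rule indep_vars_integrable[OF _ ind2]) (use gint in auto)
  have EW2: "(\<Prod>i\<in>{1..n}. \<integral>x. g (Y i x) \<partial>M) = (\<integral>x. g (Y 1 x) \<partial>M) ^ n"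
  proof -
    have "(\<Prod>i\<in>{1..n}. \<integral>x. g (Y i x) \<partial>M) = (\<Prod>i\<in>{1..n}. \<integral>x. g (Y 1 x) \<partial>M)"
      by (rule prod.cong[OF refl], rule gsame) simp
    then show ?thesis by simp
  qed
  define A where "A = {x\<in>space M. t \<le> (\<Sum>k=1..n. Y k x) \<and> (\<forall>i\<in>{1..n}. Y i x < y)}"
  have Wnn: "0 \<le> W x" for x unfolding W_def using g0 by (simp add: prod_nonneg)
  have ptw: "indicator A x \<le> exp (- h * t) * W x" if "x \<in> space M" for x
  proof (cases "x \<in> A")
    case True
    have "W x = (\<Prod>i\<in>{1..n}. exp (h * Y i x))" unfolding W_def
      by (rule prod.cong) (use True in \<open>auto simp: A_def g_def\<close>)
    also have "\<dots> = exp (h * (\<Sum>k=1..n. Y k x))" by (simp add: exp_sum sum_distrib_left)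
    finally have Wx: "W x = exp (h * (\<Sum>k=1..n. Y k x))" .
    have "t \<le> (\<Sum>k=1..n. Y k x)" using True unfolding A_def by blast
    then have "h * t \<le> h * (\<Sum>k=1..n. Y k x)" using h by (intro mult_left_mono) auto
    then have "1 \<le> exp (- h * t + h * (\<Sum>k=1..n. Y k x))" by simp
    also have "\<dots> = exp (- h * t) * W x" unfolding Wx by (rule exp_add)
    finally show ?thesis using True by simp
  next
    case False
    then show ?thesis using Wnn[of x] by simp
  qed
  have AI: "A \<inter> space M = A" unfolding A_def by blast
  have "measure M A = (\<integral>x. indicator A x \<partial>M)"
    using AI by simp
  also have "\<dots> \<le> (\<integral>x. exp (- h * t) * W x \<partial>M)"
    by (rule integral_mono') (use Wint ptw Wnn in auto)
  also have "\<dots> = exp (- h * t) * (\<integral>x. g (Y 1 x) \<partial>M) ^ n"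
    using EW EW2 by simp
  also have "\<dots> \<le> exp (- h * t) * (1 + s * c) ^ n"
  proof -
    have "0 \<le> (\<integral>x. g (Y 1 x) \<partial>M)" by (rule integral_nonneg_AE) (simp add: g0)
    then show ?thesis using Eg by (intro mult_left_mono power_mono) auto
  qed
  finally show ?thesis unfolding A_def s_def c_def .
qed
theorem lemma3:
  fixes M :: "'a measure" and Y :: "nat \<Rightarrow> 'a \<Rightarrow> real" and F :: "nat \<Rightarrow> 'a measure"
    and \<sigma> :: "'a \<Rightarrow> enat" and r t :: real and n :: nat
  assumes "prob_space M"
    and rv: "\<And>k. k \<ge> 1 \<Longrightarrow> Y k \<in> borel_measurable M"
    and indep: "prob_space.indep_vars M (\<lambda>_. borel) Y {1..}"
    and ident: "\<And>k. k \<ge> 1 \<Longrightarrow> distr M borel (Y k) = distr M borel (Y 1)"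
    and mean0: "integrable M (Y 1)" "(\<integral>x. Y 1 x \<partial>M) = 0"
    and sq: "integrable M (\<lambda>x. (Y 1 x)\<^sup>2)"
    and filt: "filtration (space M) F" "\<And>k. sets (F k) \<subseteq> sets M"
    and adapted: "\<And>k. k \<ge> 1 \<Longrightarrow> Y k \<in> borel_measurable (F k)"
    and indepF: "\<And>k. k \<ge> 1 \<Longrightarrow>
        prob_space.indep_set M {Y k -` A \<inter> space M | A. A \<in> sets borel} (sets (F (k - 1)))"
    and stop: "nat_stopping_time F \<sigma>"
    and "r > 1" and "t > 0" and "n \<ge> 1"
  shows "measure M {x \<in> space M. (\<Sum>k=1..n. Y k x) \<ge> t \<and> \<sigma> x > enat n}
    \<le> measure M {x \<in> space M. Y 1 x \<ge> t / r}
        * (\<Sum>i=1..n. measure M {x \<in> space M. \<sigma> x > enat (i - 1)})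
      + exp r * (real n * r * (\<integral>x. (Y 1 x)\<^sup>2 \<partial>M) / t\<^sup>2) powr r"
proof -
  interpret prob_space M by fact
  note r = \<open>r > 1\<close> and tp = \<open>t > 0\<close> and n1 = \<open>n \<ge> 1\<close>
  define y where "y = t / r"
  have y: "y > 0" using r tp unfolding y_def by simp
  define s where "s = (\<integral>x. (Y 1 x)\<^sup>2 \<partial>M)"
  have s0: "s \<ge> 0" unfolding s_def by (rule integral_nonneg_AE) simp
  define q where "q = real n * r * s / t\<^sup>2"
  have q0: "q \<ge> 0" unfolding q_def using s0 r by simp
  have rvI[measurable]: "Y k \<in> borel_measurable M" if "k \<in> {1..n}" for k using rv that by auto
  have sm[measurable]: "(\<lambda>x. \<Sum>k=1..n. Y k x) \<in> borel_measurable M"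
    by (rule borel_measurable_sum) (use rv in auto)
  define A2 where "A2 = {x\<in>space M. t \<le> (\<Sum>k=1..n. Y k x) \<and> (\<forall>i\<in>{1..n}. Y i x < y)}"
  have A2m: "A2 \<in> sets M" unfolding A2_def by measurable
  have ch: "measure M A2 \<le> exp (- h * t) * (1 + s * (exp (h * y) / y\<^sup>2)) ^ n" if "h > 0" for h
    unfolding A2_def s_def
    by (rule chernoff[OF \<open>prob_space M\<close> rv indep ident mean0 sq that y])
  have A2b: "measure M A2 \<le> exp r * q powr r"
  proof (cases "q \<ge> 1")
    case True
    have "measure M A2 \<le> 1" by simp
    also have "1 \<le> exp r * q powr r"
    proof -
      have "1 \<le> q powr r" using True r by (intro ge_one_powr_ge_zero) auto
      moreover have "1 \<le> exp r" using r by simp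
      ultimately have "1 * 1 \<le> exp r * q powr r" by (intro mult_mono) auto
      then show ?thesis by simp
    qed
    finally show ?thesis .
  next
    case False
    show ?thesis
    proof (cases "q = 0")
      case True
      then have s00: "s = 0" using n1 r tp unfolding q_def by auto
      have "measure M A2 \<le> 0"
      proof (rule ccontr)
        define p where "p = measure M A2"
        assume "\<not> measure M A2 \<le> 0"
        then have p: "p > 0" unfolding p_def by simp
        have "p \<le> exp (- (1 / (t * p)) * t)"
          using ch[of "1 / (t * p)"] p tp s00 unfolding p_def by simp
        also have "- (1 / (t * p)) * t = - (1 / p)" using tp p by simp
        also have "exp (- (1 / p)) = inverse (exp (1 / p))" by (simp add: exp_minus)
        also have "\<dots> \<le> inverse (1 + 1 / p)"
          using p by (intro le_imp_inverse_le) (auto simp: exp_ge_add_one_self add_pos_nonneg)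
        also have "\<dots> = p / (p + 1)" using p by (simp add: field_simps)
        also have "\<dots> < p" using p by (simp add: field_simps)
        finally show False by simp
      qed
      then show ?thesis using True by simp
    next
      case q0': False
      then have qp: "q > 0" and q1: "q < 1" using q0 False by auto
      have sp: "s > 0"
      proof (rule ccontr)
        assume "\<not> s > 0" then have "s = 0" using s0 by simp
        then show False using qp unfolding q_def by simp
      qed
      define h where "h = - ln q / y"
      have hp: "h > 0" unfolding h_def using qp q1 y by (simp add: divide_neg_pos)
      have ehy: "exp (h * y) = 1 / q" unfolding h_def using y qp by (simp add: exp_minus exp_ln field_simps)
      have eht: "exp (- h * t) = q powr r"
        unfolding h_def y_def powr_def using qp tp r by (simp add: field_simps)
      have key: "real n * (s * (1 / q / y\<^sup>2)) = r"
        unfolding q_def y_def using sp tp r n1 by (simp add: field_simps power2_eq_square)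
      have "measure M A2 \<le> exp (- h * t) * (1 + s * (exp (h * y) / y\<^sup>2)) ^ n" by (rule ch[OF hp])
      also have "\<dots> \<le> exp (- h * t) * exp (s * (exp (h * y) / y\<^sup>2)) ^ n"
        using sp y by (intro mult_left_mono power_mono) (auto simp: exp_ge_add_one_self)
      also have "exp (s * (exp (h * y) / y\<^sup>2)) ^ n = exp (real n * (s * (exp (h * y) / y\<^sup>2)))"
        by (rule exp_of_nat_mult[symmetric])
      also have "\<dots> = exp r" using key ehy by simp
      finally show ?thesis using eht by (simp add: mult.commute)
    qed
  qed
  define E where "E k = {x\<in>space M. enat k < \<sigma> x}" for k
  have Ek: "E k \<in> sets (F k)" for k
  proof -
    have "{x\<in>space (F k). \<sigma> x \<le> enat k} \<in> sets (F k)"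
      using stop unfolding nat_stopping_time_def pred_def by auto
    then have "space (F k) - {x\<in>space (F k). \<sigma> x \<le> enat k} \<in> sets (F k)" by auto
    also have "space (F k) - {x\<in>space (F k). \<sigma> x \<le> enat k} = E k"
      unfolding E_def using filtration.space_F[OF filt(1)] by (auto simp: not_le)
    finally show ?thesis .
  qed
  have EkM: "E k \<in> sets M" for k using Ek filt(2) by auto
  define B where "B i = (Y i -` {y..} \<inter> space M) \<inter> E (i - 1)" for i
  have Bm: "B i \<in> sets M" if "i \<in> {1..n}" for i
    unfolding B_def using EkM rvI[OF that] by (intro sets.Int measurable_sets) auto
  have PY: "prob (Y i -` {y..} \<inter> space M) = measure M {x \<in> space M. Y 1 x \<ge> t / r}" if "i \<ge> 1" for i
  proof -
    have "prob (Y i -` {y..} \<inter> space M) = measure (distr M borel (Y i)) {y..}"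
      using rv[OF that] by (simp add: measure_distr)
    also have "\<dots> = measure (distr M borel (Y 1)) {y..}" using ident[OF that] by simp
    also have "\<dots> = prob (Y 1 -` {y..} \<inter> space M)"
      using rv[of 1] by (simp add: measure_distr)
    also have "Y 1 -` {y..} \<inter> space M = {x \<in> space M. Y 1 x \<ge> t / r}" unfolding y_def by auto
    finally show ?thesis .
  qed
  have PB: "measure M (B i) = measure M {x \<in> space M. Y 1 x \<ge> t / r} * measure M {x \<in> space M. \<sigma> x > enat (i - 1)}"
    if "i \<ge> 1" for i
  proof -
    have ind: "indep_set {Y i -` A \<inter> space M | A. A \<in> sets borel} (sets (F (i - 1)))"
      using indepF[OF that] .
    have "Y i -` {y..} \<inter> space M \<in> {Y i -` A \<inter> space M | A. A \<in> sets borel}"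
      by (intro CollectI exI[of _ "{y..}"]) auto
    then have "prob (B i) = prob (Y i -` {y..} \<inter> space M) * prob (E (i - 1))"
      using ind Ek[of "i - 1"] unfolding indep_sets2_eq B_def by blast
    then show ?thesis using PY[OF that] unfolding E_def by simp
  qed
  define S where "S = {x \<in> space M. (\<Sum>k=1..n. Y k x) \<ge> t \<and> \<sigma> x > enat n}"
  have sub: "S \<subseteq> A2 \<union> (\<Union>i\<in>{1..n}. B i)"
  proof
    fix x assume x: "x \<in> S"
    show "x \<in> A2 \<union> (\<Union>i\<in>{1..n}. B i)"
    proof (cases "\<forall>i\<in>{1..n}. Y i x < y")
      case True then show ?thesis using x unfolding S_def A2_def by auto
    next
      case False
      then obtain i where i: "i \<in> {1..n}" "y \<le> Y i x" by auto
      have "enat (i - 1) \<le> enat n" using i by auto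
      also have "enat n < \<sigma> x" using x unfolding S_def by auto
      finally have "x \<in> B i" using i x unfolding B_def E_def S_def by auto
      then show ?thesis using i by auto
    qed
  qed
  have "measure M S \<le> measure M (A2 \<union> (\<Union>i\<in>{1..n}. B i))"
    using sub A2m Bm by (intro finite_measure_mono) auto
  also have "\<dots> \<le> measure M A2 + measure M (\<Union>i\<in>{1..n}. B i)"
    using A2m Bm by (intro measure_Un_le) auto
  also have "measure M (\<Union>i\<in>{1..n}. B i) \<le> (\<Sum>i\<in>{1..n}. measure M (B i))"
    using Bm by (intro measure_UNION_le) auto
  also have "(\<Sum>i\<in>{1..n}. measure M (B i)) = measure M {x \<in> space M. Y 1 x \<ge> t / r}
        * (\<Sum>i=1..n. measure M {x \<in> space M. \<sigma> x > enat (i - 1)})"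
    using PB by (simp add: sum_distrib_left)
  finally show ?thesis using A2b unfolding S_def q_def s_def by linarith
qed
end
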